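(* Let $\Gamma$ be a finite generalised hexagon of order $(s,t)$ and let $\Gamma'$ be a subhexagon of $\Gamma$ of order $(k,t)$. If $k^2t=s$, then every line of $\Gamma$ intersects a line of $\Gamma'$. In particular, every line of a split Cayley hexagon $\mathsf{H}(q)$ meets a line of any subhexagon of order $(1,q)$, and every line of $\mathsf{T}(q^3,q)$ meets a line of any split Cayley subhexagon $\mathsf{H}(q)$ (of order $(q,q)$) of $\mathsf{T}(q^3,q)$.
   Context: A generalised hexagon of order $(s,t)$ has $s+1$ points per line and $t+1$ lines per point and has $(1+s)(1+st+s^2t^2)$ points and $(1+t)(1+st+s^2t^2)$ lines. A subhexagon is a subgeometry that is itself a (weak) generalised hexagon. *)

theory Defs
  imports Main
begin

definition inc_vertices :: "'p set \<Rightarrow> 'l set \<Rightarrow> ('p + 'l) set" where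
  "inc_vertices P L = Inl ` P \<union> Inr ` L"

fun inc_adj :: "'p set \<Rightarrow> 'l set \<Rightarrow> ('p \<Rightarrow> 'l \<Rightarrow> bool) \<Rightarrow> ('p + 'l) \<Rightarrow> ('p + 'l) \<Rightarrow> bool" where
  "inc_adj P L I (Inl p) (Inr l) = (p \<in> P \<and> l \<in> L \<and> I p l)"
| "inc_adj P L I (Inr l) (Inl p) = (p \<in> P \<and> l \<in> L \<and> I p l)"
| "inc_adj P L I _ _ = False"

text \<open>A walk is a nonempty vertex list with consecutive vertices adjacent;
its length is the number of edges, i.e. length xs - 1.\<close>
definition inc_walk :: "'p set \<Rightarrow> 'l set \<Rightarrow> ('p \<Rightarrow> 'l \<Rightarrow> bool) \<Rightarrow> ('p + 'l) list \<Rightarrow> bool" where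
  "inc_walk P L I xs \<longleftrightarrow> xs \<noteq> [] \<and> set xs \<subseteq> inc_vertices P L \<and>
     (\<forall>i. Suc i < length xs \<longrightarrow> inc_adj P L I (xs ! i) (xs ! Suc i))"

definition inc_dist_le :: "'p set \<Rightarrow> 'l set \<Rightarrow> ('p \<Rightarrow> 'l \<Rightarrow> bool) \<Rightarrow> ('p + 'l) \<Rightarrow> ('p + 'l) \<Rightarrow> nat \<Rightarrow> bool" where
  "inc_dist_le P L I x y d \<longleftrightarrow>
     (\<exists>xs. inc_walk P L I xs \<and> hd xs = x \<and> last xs = y \<and> length xs \<le> Suc d)"

definition inc_cycle :: "'p set \<Rightarrow> 'l set \<Rightarrow> ('p \<Rightarrow> 'l \<Rightarrow> bool) \<Rightarrow> ('p + 'l) list \<Rightarrow> bool" where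
  "inc_cycle P L I vs \<longleftrightarrow> length vs \<ge> 3 \<and> distinct vs \<and> inc_walk P L I vs \<and>
     inc_adj P L I (last vs) (hd vs)"

text \<open>Generalised n-gon (possibly weak): incidence graph of diameter n and girth 2n.\<close>
definition gen_polygon :: "nat \<Rightarrow> 'p set \<Rightarrow> 'l set \<Rightarrow> ('p \<Rightarrow> 'l \<Rightarrow> bool) \<Rightarrow> bool" where
  "gen_polygon n P L I \<longleftrightarrow>
     (\<forall>x \<in> inc_vertices P L. \<forall>y \<in> inc_vertices P L. inc_dist_le P L I x y n) \<and>
     (\<exists>x \<in> inc_vertices P L. \<exists>y \<in> inc_vertices P L. \<not> inc_dist_le P L I x y (n - 1)) \<and>
     (\<forall>vs. inc_cycle P L I vs \<longrightarrow> length vs \<ge> 2 * n) \<and>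
     (\<exists>vs. inc_cycle P L I vs \<and> length vs = 2 * n)"

definition gen_hexagon_of_order :: "'p set \<Rightarrow> 'l set \<Rightarrow> ('p \<Rightarrow> 'l \<Rightarrow> bool) \<Rightarrow> nat \<Rightarrow> nat \<Rightarrow> bool" where
  "gen_hexagon_of_order P L I s t \<longleftrightarrow>
     finite P \<and> finite L \<and> s \<ge> 1 \<and> t \<ge> 1 \<and> gen_polygon 6 P L I \<and>
     (\<forall>l \<in> L. card {p \<in> P. I p l} = s + 1) \<and>
     (\<forall>p \<in> P. card {l \<in> L. I p l} = t + 1)"

definition subhexagon_of_order :: "'p set \<Rightarrow> 'l set \<Rightarrow> 'p set \<Rightarrow> 'l set \<Rightarrow> ('p \<Rightarrow> 'l \<Rightarrow> bool) \<Rightarrow> nat \<Rightarrow> nat \<Rightarrow> bool" where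
  "subhexagon_of_order P' L' P L I k t \<longleftrightarrow>
     P' \<subseteq> P \<and> L' \<subseteq> L \<and> gen_hexagon_of_order P' L' I k t"

end

theory Submission imports Defs begin

lemma inc_adj_sym: "inc_adj P L I u v = inc_adj P L I v u"
  by (cases u; cases v; simp)

lemma inc_adj_V: "inc_adj P L I u v \<Longrightarrow> u \<in> inc_vertices P L \<and> v \<in> inc_vertices P L"
  by (cases u; cases v; auto simp: inc_vertices_def)

lemma inc_adj_isl: "inc_adj P L I u v \<Longrightarrow> isl u \<noteq> isl v"
  by (cases u; cases v; auto)

lemma inc_adj_mono: "P' \<subseteq> P \<Longrightarrow> L' \<subseteq> L \<Longrightarrow> inc_adj P' L' I u v \<Longrightarrow> inc_adj P L I u v"
  by (cases u; cases v; auto)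

lemma inc_walk_mono: "P' \<subseteq> P \<Longrightarrow> L' \<subseteq> L \<Longrightarrow> inc_walk P' L' I xs \<Longrightarrow> inc_walk P L I xs"
  unfolding inc_walk_def inc_vertices_def using inc_adj_mono by blast

lemma walk_take: "inc_walk P L I xs \<Longrightarrow> 0 < n \<Longrightarrow> inc_walk P L I (take n xs)"
  unfolding inc_walk_def by (auto dest: in_set_takeD)

lemma walk_drop: "inc_walk P L I xs \<Longrightarrow> n < length xs \<Longrightarrow> inc_walk P L I (drop n xs)"
  unfolding inc_walk_def by (auto dest: in_set_dropD)

lemma walk_Cons: "inc_walk P L I xs \<Longrightarrow> inc_adj P L I x (hd xs) \<Longrightarrow> inc_walk P L I (x # xs)"
  unfolding inc_walk_def
  apply (auto dest: inc_adj_V)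
  subgoal for i by (cases i) (auto simp: hd_conv_nth)
  done

lemma walk_snoc: "inc_walk P L I xs \<Longrightarrow> inc_adj P L I (last xs) y \<Longrightarrow> inc_walk P L I (xs @ [y])"
  unfolding inc_walk_def
  apply (auto dest: inc_adj_V simp: nth_append)
  subgoal for i by (metis Suc_lessI last_conv_nth less_antisym diff_Suc_1)
  done

lemma walk_append: "inc_walk P L I xs \<Longrightarrow> inc_walk P L I ys \<Longrightarrow> last xs = hd ys \<Longrightarrow> inc_walk P L I (xs @ tl ys)"
proof (induction ys arbitrary: xs rule: rev_induct)
  case Nil then show ?case by (simp add: inc_walk_def)
next
  case (snoc y ys)
  show ?case
  proof (cases "ys = []")
    case True then show ?thesis using snoc by simp
  next
    case False
    have w: "inc_walk P L I ys" using snoc.prems(2) False walk_take[of P L I "ys @ [y]" "length ys"]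
      by simp
    have "inc_walk P L I (xs @ tl ys)" using snoc.IH[OF snoc.prems(1) w] snoc.prems(3) False by simp
    moreover have "inc_adj P L I (last ys) y"
    proof -
      let ?i = "length ys - 1"
      have "Suc ?i < length (ys @ [y])" using False by simp
      then have "inc_adj P L I ((ys @ [y]) ! ?i) ((ys @ [y]) ! Suc ?i)"
        using snoc.prems(2) unfolding inc_walk_def by blast
      moreover have "(ys @ [y]) ! ?i = last ys" using False by (simp add: nth_append last_conv_nth)
      moreover have "(ys @ [y]) ! Suc ?i = y" using False by (simp add: nth_append)
      ultimately show ?thesis by simp
    qed
    moreover have "last (xs @ tl ys) = last ys"
      using snoc.prems(3) False by (cases ys) auto
    ultimately have "inc_walk P L I ((xs @ tl ys) @ [y])" using walk_snoc[of P L I "xs @ tl ys" y]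
      by metis
    moreover have "tl (ys @ [y]) = tl ys @ [y]" using False by simp
    ultimately show ?thesis by (metis append_assoc)
  qed
qed

lemma walk_rev: "inc_walk P L I xs \<Longrightarrow> inc_walk P L I (rev xs)"
  unfolding inc_walk_def
proof (intro conjI allI impI)
  fix i assume a: "xs \<noteq> [] \<and> set xs \<subseteq> inc_vertices P L \<and>
     (\<forall>i. Suc i < length xs \<longrightarrow> inc_adj P L I (xs ! i) (xs ! Suc i))" "Suc i < length (rev xs)"
  let ?j = "length xs - Suc (Suc i)"
  have "Suc ?j < length xs" using a by simp
  then have "inc_adj P L I (xs ! ?j) (xs ! Suc ?j)" using a by blast
  moreover have "rev xs ! i = xs ! Suc ?j" using a by (simp add: rev_nth Suc_diff_Suc)
  moreover have "rev xs ! Suc i = xs ! ?j" using a by (simp add: rev_nth)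
  ultimately show "inc_adj P L I (rev xs ! i) (rev xs ! Suc i)" using inc_adj_sym by metis
qed auto

lemma walk_parity: "inc_walk P L I xs \<Longrightarrow> i < length xs \<Longrightarrow> isl (xs ! i) = (isl (hd xs) = even i)"
proof (induction i)
  case 0 then show ?case by (simp add: hd_conv_nth inc_walk_def)
next
  case (Suc i)
  then have "inc_adj P L I (xs ! i) (xs ! Suc i)" unfolding inc_walk_def by blast
  then show ?case using Suc inc_adj_isl by fastforce
qed


lemma dist_le_mono: "inc_dist_le P L I x y d \<Longrightarrow> d \<le> d' \<Longrightarrow> inc_dist_le P L I x y d'"
  unfolding inc_dist_le_def by fastforce

lemma dist_le_walk: "inc_walk P L I xs \<Longrightarrow> inc_dist_le P L I (hd xs) (last xs) (length xs - 1)"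
  unfolding inc_dist_le_def inc_walk_def by (rule exI[of _ xs]) auto

lemma dist_le_refl: "x \<in> inc_vertices P L \<Longrightarrow> inc_dist_le P L I x x 0"
  using dist_le_walk[of P L I "[x]"] by (simp add: inc_walk_def)

lemma dist_le_adj: "inc_adj P L I x y \<Longrightarrow> inc_dist_le P L I x y 1"
  using dist_le_walk[of P L I "[x,y]"] inc_adj_V[of P L I x y]
  by (simp add: inc_walk_def less_Suc_eq)

lemma dist_le_0: "inc_dist_le P L I x y 0 \<Longrightarrow> x = y"
  unfolding inc_dist_le_def inc_walk_def by (auto simp: le_Suc_eq length_Suc_conv)

lemma dist_le_trans: "inc_dist_le P L I x y d1 \<Longrightarrow> inc_dist_le P L I y z d2 \<Longrightarrow> inc_dist_le P L I x z (d1 + d2)"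
proof -
  assume "inc_dist_le P L I x y d1" "inc_dist_le P L I y z d2"
  then obtain xs ys where xs: "inc_walk P L I xs" "hd xs = x" "last xs = y" "length xs \<le> Suc d1"
    and ys: "inc_walk P L I ys" "hd ys = y" "last ys = z" "length ys \<le> Suc d2"
    unfolding inc_dist_le_def by blast
  have w: "inc_walk P L I (xs @ tl ys)" using walk_append xs ys by metis
  have ne: "xs \<noteq> []" "ys \<noteq> []" using xs ys by (auto simp: inc_walk_def)
  have "hd (xs @ tl ys) = x" using xs ne by simp
  moreover have "last (xs @ tl ys) = z" using xs ys ne by (cases ys) auto
  moreover have "length (xs @ tl ys) \<le> Suc (d1 + d2)" using xs ys ne by (cases ys) auto
  ultimately show ?thesis using w unfolding inc_dist_le_def by blast
qed

lemma dist_le_sym: "inc_dist_le P L I x y d \<Longrightarrow> inc_dist_le P L I y x d"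
  unfolding inc_dist_le_def
  apply clarify
  subgoal for xs
    apply (rule exI[of _ "rev xs"])
    using walk_rev[of P L I xs] by (auto simp: inc_walk_def hd_rev last_rev)
  done

definition idist :: "'p set \<Rightarrow> 'l set \<Rightarrow> ('p \<Rightarrow> 'l \<Rightarrow> bool) \<Rightarrow> ('p + 'l) \<Rightarrow> ('p + 'l) \<Rightarrow> nat" where
  "idist P L I x y = (LEAST n. inc_dist_le P L I x y n)"

lemma idist_le: "inc_dist_le P L I x y d \<Longrightarrow> idist P L I x y \<le> d"
  unfolding idist_def by (rule Least_le)

lemma idist_ok: "inc_dist_le P L I x y d \<Longrightarrow> inc_dist_le P L I x y (idist P L I x y)"
  unfolding idist_def by (rule LeastI)

lemma idist_walk: "inc_walk P L I xs \<Longrightarrow> idist P L I (hd xs) (last xs) \<le> length xs - 1"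
  using idist_le dist_le_walk by metis

lemma shortest_walk:
  assumes "inc_dist_le P L I x y d"
  obtains xs where "inc_walk P L I xs" "hd xs = x" "last xs = y" "length xs = Suc (idist P L I x y)"
proof -
  obtain xs where xs: "inc_walk P L I xs" "hd xs = x" "last xs = y" "length xs \<le> Suc (idist P L I x y)"
    using idist_ok[OF assms] unfolding inc_dist_le_def by blast
  have "idist P L I x y \<le> length xs - 1" using idist_walk[OF xs(1)] xs by simp
  moreover have "length xs > 0" using xs(1) by (simp add: inc_walk_def)
  ultimately have "length xs = Suc (idist P L I x y)" using xs(4) by linarith
  then show ?thesis using that xs by blast
qed

lemma shortest_walk_nth:
  assumes w: "inc_walk P L I xs" and h: "hd xs = x" and l: "last xs = y"
    and len: "length xs = Suc (idist P L I x y)" and i: "i < length xs"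
  shows "idist P L I x (xs ! i) = i"
proof -
  have ne: "xs \<noteq> []" using w by (simp add: inc_walk_def)
  have w1: "inc_walk P L I (take (Suc i) xs)" using walk_take[OF w] by simp
  have "hd (take (Suc i) xs) = x" using h ne by (simp add: hd_conv_nth)
  moreover have "last (take (Suc i) xs) = xs ! i" using i by (simp add: take_Suc_conv_app_nth)
  moreover have "length (take (Suc i) xs) = Suc i" using i by simp
  ultimately have d1: "inc_dist_le P L I x (xs ! i) i"
    using dist_le_walk[OF w1] by simp
  have w2: "inc_walk P L I (drop i xs)" using walk_drop[OF w i] .
  have "hd (drop i xs) = xs ! i" using i by (simp add: hd_drop_conv_nth)
  moreover have "last (drop i xs) = y" using i l by simp
  ultimately have d2: "inc_dist_le P L I (xs ! i) y (idist P L I x y - i)"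
    using dist_le_walk[OF w2] i len by simp
  have "idist P L I x (xs ! i) \<le> i" using idist_le[OF d1] .
  moreover have "inc_dist_le P L I x y (idist P L I x (xs ! i) + (idist P L I x y - i))"
    using dist_le_trans[OF idist_ok[OF d1] d2] .
  then have "idist P L I x y \<le> idist P L I x (xs ! i) + (idist P L I x y - i)" by (rule idist_le)
  ultimately show ?thesis using i len by linarith
qed

lemma shortest_walk_distinct:
  assumes "inc_walk P L I xs" "hd xs = x" "last xs = y" "length xs = Suc (idist P L I x y)"
  shows "distinct xs"
  unfolding distinct_conv_nth using shortest_walk_nth[OF assms] by metis

lemma idist_parity:
  assumes "inc_dist_le P L I x y d"
  shows "isl y = (isl x = even (idist P L I x y))"
proof -
  obtain xs where xs: "inc_walk P L I xs" "hd xs = x" "last xs = y" "length xs = Suc (idist P L I x y)"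
    using shortest_walk[OF assms] by blast
  have "xs \<noteq> []" using xs(1) by (simp add: inc_walk_def)
  then have "xs ! idist P L I x y = y" using xs by (simp add: last_conv_nth)
  then show ?thesis using walk_parity[OF xs(1), of "idist P L I x y"] xs by simp
qed

lemma parity_aux: "even (a::nat) \<noteq> even b \<Longrightarrow> a \<le> Suc b \<Longrightarrow> b \<le> Suc a \<Longrightarrow> b = Suc a \<or> a = Suc b"
  by presburger

lemma idist_adj:
  assumes "inc_dist_le P L I x u d" "inc_adj P L I u v"
  shows "idist P L I x v = Suc (idist P L I x u) \<or> idist P L I x u = Suc (idist P L I x v)"
proof -
  have a: "inc_dist_le P L I x v (Suc (idist P L I x u))"
    using dist_le_trans[OF idist_ok[OF assms(1)] dist_le_adj[OF assms(2)]] by simp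
  have "inc_dist_le P L I x u (Suc (idist P L I x v))"
    using dist_le_trans[OF idist_ok[OF a] dist_le_adj[of P L I v u]] assms(2) inc_adj_sym[of P L I] by simp
  then have "idist P L I x u \<le> Suc (idist P L I x v)" by (rule idist_le)
  moreover have "idist P L I x v \<le> Suc (idist P L I x u)" using idist_le[OF a] .
  moreover have "isl u \<noteq> isl v" using inc_adj_isl[OF assms(2)] .
  ultimately have p: "even (idist P L I x u) \<noteq> even (idist P L I x v)"
    using idist_parity[OF assms(1)] idist_parity[OF a] by auto
  show ?thesis using parity_aux[OF p \<open>idist P L I x u \<le> Suc (idist P L I x v)\<close> idist_le[OF a]] by blast
qed

lemma idist_0: "inc_dist_le P L I x y d \<Longrightarrow> idist P L I x y = 0 \<longleftrightarrow> x = y"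
proof
  assume a: "inc_dist_le P L I x y d" "idist P L I x y = 0"
  then show "x = y" using idist_ok[OF a(1)] dist_le_0 by metis
next
  assume a: "inc_dist_le P L I x y d" "x = y"
  then have xv: "x \<in> inc_vertices P L" unfolding inc_dist_le_def inc_walk_def
    by (metis hd_in_set subsetD)
  show "idist P L I x y = 0" using idist_le[OF dist_le_refl[OF xv, of I]] a(2) by simp
qed

lemma idist_parent:
  assumes "inc_dist_le P L I x y d" "idist P L I x y = Suc j"
  obtains u where "inc_adj P L I u y" "idist P L I x u = j" "inc_dist_le P L I x u j"
proof -
  obtain xs where xs: "inc_walk P L I xs" "hd xs = x" "last xs = y" "length xs = Suc (idist P L I x y)"
    using shortest_walk[OF assms(1)] by blast
  have "idist P L I x (xs ! j) = j" using shortest_walk_nth[OF xs, of j] xs(4) assms(2) by simp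
  moreover have "inc_adj P L I (xs ! j) (xs ! Suc j)" using xs assms unfolding inc_walk_def by simp
  moreover have "xs ! Suc j = y" using xs assms by (metis diff_Suc_1 last_conv_nth list.size(3) nat.distinct(1))
  moreover have "inc_dist_le P L I x (xs ! j) j"
  proof -
    have "hd (take (Suc j) xs) = x" using xs(2) by (cases xs) auto
    moreover have "last (take (Suc j) xs) = xs ! j" using xs(4) assms(2) by (simp add: take_Suc_conv_app_nth)
    moreover have "length (take (Suc j) xs) = Suc j" using xs(4) assms(2) by simp
    ultimately show ?thesis using dist_le_walk[OF walk_take[OF xs(1), of "Suc j"]] by simp
  qed
  ultimately show ?thesis using that[of "xs ! j"] by simp
qed


lemma unique_parent:
  assumes girth: "\<And>vs. inc_cycle P L I vs \<Longrightarrow> 12 \<le> length vs"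
    and dy: "idist P L I x y = Suc j" and j: "j \<le> 4"
    and a1: "inc_adj P L I za y" and a2: "inc_adj P L I zb y"
    and c1: "inc_dist_le P L I x za ka" and c2: "inc_dist_le P L I x zb kb"
    and e1: "idist P L I x za = j" and e2: "idist P L I x zb = j"
  shows "za = zb"
proof (rule ccontr)
  assume ne: "za \<noteq> zb"
  obtain a where a: "inc_walk P L I a" "hd a = x" "last a = za" "length a = Suc (idist P L I x za)"
    using shortest_walk[OF c1] by blast
  obtain b where b: "inc_walk P L I b" "hd b = x" "last b = zb" "length b = Suc (idist P L I x zb)"
    using shortest_walk[OF c2] by blast
  define J where "J = Suc j"
  have la: "length a = J" and lb: "length b = J" using a(4) b(4) e1 e2 J_def by auto
  have da: "\<And>i. i < J \<Longrightarrow> idist P L I x (a ! i) = i" using shortest_walk_nth[OF a] la by simp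
  have db: "\<And>i. i < J \<Longrightarrow> idist P L I x (b ! i) = i" using shortest_walk_nth[OF b] lb by simp
  have ane: "a \<noteq> []" and bne: "b \<noteq> []" using la lb J_def by auto
  have aj: "a ! j = za" using a(3) ane la J_def by (simp add: last_conv_nth)
  have bj: "b ! j = zb" using b(3) bne lb J_def by (simp add: last_conv_nth)
  have a0: "a ! 0 = x" using a(2) ane by (simp add: hd_conv_nth)
  have b0: "b ! 0 = x" using b(2) bne by (simp add: hd_conv_nth)
  have aV: "\<And>i. i < J \<Longrightarrow> a ! i \<in> inc_vertices P L" using a(1) la unfolding inc_walk_def
    by (metis nth_mem subsetD)
  have bV: "\<And>i. i < J \<Longrightarrow> b ! i \<in> inc_vertices P L" using b(1) lb unfolding inc_walk_def
    by (metis nth_mem subsetD)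
  have yV: "y \<in> inc_vertices P L" using inc_adj_V[OF a1] by blast
  have aadj: "\<And>i. Suc i < J \<Longrightarrow> inc_adj P L I (a ! i) (a ! Suc i)" using a(1) la unfolding inc_walk_def by blast
  have badj: "\<And>i. Suc i < J \<Longrightarrow> inc_adj P L I (b ! i) (b ! Suc i)" using b(1) lb unfolding inc_walk_def by blast
  define M where "M = {i. i \<le> j \<and> a ! i = b ! i}"
  have M0: "0 \<in> M" using a0 b0 M_def by simp
  have finM: "finite M" unfolding M_def by simp
  define m where "m = Max M"
  have mM: "m \<in> M" using M0 finM m_def Max_in by blast
  have maxM: "\<And>i. i \<in> M \<Longrightarrow> i \<le> m" using finM m_def by simp
  have mj: "m < j"
  proof -
    have "m \<le> j" using mM M_def by simp
    moreover have "m \<noteq> j" using mM M_def aj bj ne by auto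
    ultimately show ?thesis by simp
  qed
  have abm: "a ! m = b ! m" using mM M_def by simp
  define q where "q = J - m"
  have q2: "2 \<le> q" using mj q_def J_def by simp
  define f where "f i = (if i < q then a ! (m + i) else if i = q then y else b ! (2 * J - m - i))" for i
  define cs where "cs = map f [0..<2*q]"
  have lcs: "length cs = 2 * q" using cs_def by simp
  have fd: "idist P L I x (f i) = (if i < q then m + i else if i = q then J else 2 * J - m - i)"
    if "i < 2 * q" for i
  proof -
    consider "i < q" | "i = q" | "q < i" by linarith
    then show ?thesis
    proof cases
      case 1 then show ?thesis using da[of "m + i"] f_def q_def by simp
    next
      case 2 then show ?thesis using dy f_def J_def by simp
    next
      case 3 then show ?thesis using db[of "2 * J - m - i"] f_def q_def that by simp
    qed
  qed
  have fV: "f i \<in> inc_vertices P L" if "i < 2 * q" for i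
  proof -
    consider "i < q" | "i = q" | "q < i" by linarith
    then show ?thesis
    proof cases
      case 1 then show ?thesis using aV[of "m + i"] f_def q_def by simp
    next
      case 2 then show ?thesis using yV f_def by simp
    next
      case 3 then show ?thesis using bV[of "2 * J - m - i"] f_def q_def that by simp
    qed
  qed
  have finj: "i = k" if "i < 2 * q" "k < 2 * q" "f i = f k" for i k
  proof (rule ccontr)
    assume ik: "i \<noteq> k"
    have D: "(if i < q then m + i else if i = q then J else 2 * J - m - i) =
             (if k < q then m + k else if k = q then J else 2 * J - m - k)"
      using fd[OF that(1)] fd[OF that(2)] that(3) by simp
    have cross: "False" if "i' < q" "q < k'" "k' < 2 * q" "m + i' = 2 * J - m - k'" "f i' = f k'" for i' k'
    proof -
      let ?r = "m + i'"
      have "a ! ?r = b ! ?r" using that f_def by simp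
      moreover have "?r \<le> j" "m < ?r" using that q_def J_def mj by auto
      ultimately have "?r \<in> M" using M_def by simp
      then show False using maxM \<open>m < ?r\<close> by fastforce
    qed
    consider "i < q" "q < k" | "k < q" "q < i" | "\<not> ((i < q \<and> q < k) \<or> (k < q \<and> q < i))" by linarith
    then show False
    proof cases
      case 1 then show ?thesis using cross[of i k] D that by simp
    next
      case 2 then show ?thesis using cross[of k i] D that by simp
    next
      case 3 then show ?thesis using D ik that q_def J_def mj by (auto split: if_splits)
    qed
  qed
  have fadj: "inc_adj P L I (f i) (f (Suc i))" if "Suc i < 2 * q" for i
  proof -
    consider "Suc i < q" | "Suc i = q" | "i = q" | "q < i" by linarith
    then show ?thesis
    proof cases
      case 1 then show ?thesis using aadj[of "m + i"] f_def q_def by simp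
    next
      case 2
      then have "m + i = j" using q_def J_def mj by simp
      then show ?thesis using 2 a1 aj f_def by simp
    next
      case 3
      then have "2 * J - m - Suc i = j" using q_def J_def mj by simp
      then have "f i = y" "f (Suc i) = zb" using 3 bj f_def by auto
      then show ?thesis using a2 inc_adj_sym by metis
    next
      case 4
      define r where "r = 2 * J - m - Suc i"
      have r1: "Suc r = 2 * J - m - i" "Suc r < J" using 4 that q_def J_def mj r_def by auto
      have "inc_adj P L I (b ! r) (b ! Suc r)" using badj[of r] r1(2) by blast
      then show ?thesis using 4 f_def r1 r_def inc_adj_sym by (metis Suc_lessD not_less_iff_gr_or_eq)
    qed
  qed
  have "inc_cycle P L I cs"
    unfolding inc_cycle_def
  proof (intro conjI)
    show "3 \<le> length cs" using lcs q2 by simp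
    show "distinct cs" unfolding cs_def distinct_conv_nth using finj by auto
    show "inc_walk P L I cs" unfolding inc_walk_def
      using lcs q2 fV fadj by (auto simp: cs_def)
    have "last cs = f (2 * q - 1)" using lcs q2 cs_def by (simp add: last_conv_nth)
    also have "\<dots> = b ! Suc m"
    proof -
      have "\<not> 2 * q - 1 < q" "2 * q - 1 \<noteq> q" "2 * J - m - (2 * q - 1) = Suc m"
        using q_def q2 J_def mj by auto
      then show ?thesis using f_def by simp
    qed
    finally have l: "last cs = b ! Suc m" .
    have h: "hd cs = b ! m" using cs_def q2 f_def abm by (simp add: hd_conv_nth)
    have "inc_adj P L I (b ! m) (b ! Suc m)" using badj[of m] mj J_def by simp
    then show "inc_adj P L I (last cs) (hd cs)" using l h inc_adj_sym by metis
  qed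
  then have "12 \<le> length cs" by (rule girth)
  then show False using lcs q_def J_def j by simp
qed


lemma card_of_bool: "finite B \<Longrightarrow> card {b\<in>B. Q b} = (\<Sum>b\<in>B. (of_bool (Q b) :: nat))"
proof -
  assume f: "finite B"
  have "card {b\<in>B. Q b} = (\<Sum>b\<in>{b\<in>B. Q b}. (1::nat))" by simp
  also have "\<dots> = (\<Sum>b\<in>B. if Q b then 1 else 0)" by (rule sum.inter_filter[OF f])
  also have "\<dots> = (\<Sum>b\<in>B. (of_bool (Q b) :: nat))" by (rule sum.cong) auto
  finally show ?thesis .
qed

lemma even6: "even (n::nat) \<Longrightarrow> n \<le> 6 \<Longrightarrow> n = 0 \<or> n = 2 \<or> n = 4 \<or> n = 6"
  by presburger

lemma double_count:
  assumes "finite A" "finite B"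
  shows "(\<Sum>a\<in>A. card {b\<in>B. R a b}) = (\<Sum>b\<in>B. card {a\<in>A. R a b})"
proof -
  have "(\<Sum>a\<in>A. card {b\<in>B. R a b}) = (\<Sum>a\<in>A. \<Sum>b\<in>B. (of_bool (R a b) :: nat))"
    using card_of_bool[OF assms(2)] by simp
  also have "\<dots> = (\<Sum>b\<in>B. \<Sum>a\<in>A. (of_bool (R a b) :: nat))" by (rule sum.swap)
  also have "\<dots> = (\<Sum>b\<in>B. card {a\<in>A. R a b})"
    using card_of_bool[OF assms(1)] by simp
  finally show ?thesis .
qed

locale hexc =
  fixes P :: "'p set" and L :: "'l set" and I :: "'p \<Rightarrow> 'l \<Rightarrow> bool" and s t :: nat
  assumes finP: "finite P" and finL: "finite L"
    and girth: "\<And>vs. inc_cycle P L I vs \<Longrightarrow> 12 \<le> length vs"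
    and diam: "\<And>x y. x \<in> inc_vertices P L \<Longrightarrow> y \<in> inc_vertices P L \<Longrightarrow> inc_dist_le P L I x y 6"
    and degL: "\<And>l. l \<in> L \<Longrightarrow> card {p\<in>P. I p l} = s + 1"
    and degP: "\<And>p. p \<in> P \<Longrightarrow> card {l\<in>L. I p l} = t + 1"
begin

abbreviation "V \<equiv> inc_vertices P L"
abbreviation "adj \<equiv> inc_adj P L I"
abbreviation "d \<equiv> idist P L I"

lemma finV: "finite V" using finP finL by (simp add: inc_vertices_def)

lemma geodesic:
  assumes w: "inc_walk P L I xs" and dis: "distinct xs" and len: "length xs \<le> 7"
  shows "i < length xs \<Longrightarrow> d (hd xs) (xs ! i) = i"
proof (induction i rule: less_induct)
  case (less i)
  have ne: "xs \<noteq> []" using w by (simp add: inc_walk_def)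
  have xV: "\<And>k. k < length xs \<Longrightarrow> xs ! k \<in> V" using w unfolding inc_walk_def by (metis nth_mem subsetD)
  have h0: "hd xs = xs ! 0" using ne by (simp add: hd_conv_nth)
  have conn: "\<And>k. k < length xs \<Longrightarrow> inc_dist_le P L I (hd xs) (xs ! k) 6"
    using diam xV h0 ne by simp
  show ?case
  proof (cases i)
    case 0 then show ?thesis using idist_0[OF conn[OF less.prems]] h0 by simp
  next
    case (Suc i0)
    have IH: "d (hd xs) (xs ! i0) = i0" using less Suc by simp
    have ad: "adj (xs ! i0) (xs ! i)" using w less.prems Suc unfolding inc_walk_def by simp
    have "d (hd xs) (xs ! i) = Suc (d (hd xs) (xs ! i0)) \<or> d (hd xs) (xs ! i0) = Suc (d (hd xs) (xs ! i))"
      using idist_adj[OF conn[of i0] ad] less.prems Suc by simp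
    then show ?thesis
    proof
      assume "d (hd xs) (xs ! i) = Suc (d (hd xs) (xs ! i0))" then show ?thesis using IH Suc by simp
    next
      assume a: "d (hd xs) (xs ! i0) = Suc (d (hd xs) (xs ! i))"
      then obtain i1 where i1: "i0 = Suc i1" using IH by (cases i0) auto
      have IH1: "d (hd xs) (xs ! i1) = i1" using less i1 Suc by simp
      have ad1: "adj (xs ! i1) (xs ! i0)" using w less.prems Suc i1 unfolding inc_walk_def by simp
      have "xs ! i1 = xs ! i"
        apply (rule unique_parent[where P=P and L=L and I=I and x="hd xs" and y="xs ! i0" and j=i1 and za="xs ! i1" and zb="xs ! i" and ka=6 and kb=6])
        subgoal using girth by blast
        subgoal using IH i1 by simp
        subgoal using i1 less.prems Suc len by simp
        subgoal using ad1 .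
        subgoal using ad inc_adj_sym[of P L I "xs ! i0" "xs ! i"] by simp
        subgoal using conn[of i1] less.prems Suc i1 by simp
        subgoal using conn[of i] less.prems by simp
        subgoal using IH1 .
        subgoal using a IH i1 by simp
        done
      then have False using dis less.prems Suc i1 by (simp add: nth_eq_iff_index_eq)
      then show ?thesis ..
    qed
  qed
qed

lemma walk_idist_le: "inc_walk P L I xs \<Longrightarrow> d (hd xs) (last xs) \<le> length xs - 1"
  by (rule idist_walk)

lemma adj_d1: "adj u v \<Longrightarrow> d u v \<le> 1"
  by (rule idist_le[OF dist_le_adj])

lemma walk_list_intro:
  assumes "xs \<noteq> []" "set xs \<subseteq> V" "\<And>i. Suc i < length xs \<Longrightarrow> adj (xs ! i) (xs ! Suc i)"
  shows "inc_walk P L I xs"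
  using assms unfolding inc_walk_def by blast

lemma two_points:
  assumes "l1 \<in> L" "l2 \<in> L" "l1 \<noteq> l2" "p1 \<in> P" "p2 \<in> P" "p1 \<noteq> p2"
    "I p1 l1" "I p1 l2" "I p2 l1" "I p2 l2"
  shows False
proof -
  let ?xs = "[Inr l1, Inl p1, Inr l2, Inl p2]"
  have w: "inc_walk P L I ?xs"
  proof (rule walk_list_intro)
    show "set ?xs \<subseteq> V" using assms by (auto simp: inc_vertices_def)
    fix i assume "Suc i < length ?xs"
    then have "i = 0 \<or> i = 1 \<or> i = 2" by auto
    then show "adj (?xs ! i) (?xs ! Suc i)" by (elim disjE) (simp_all add: assms)
  qed simp
  have dis: "distinct ?xs" using assms by simp
  have "d (hd ?xs) (?xs ! 3) = 3" by (rule geodesic[OF w dis]) simp_all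
  then have "d (Inr l1) (Inl p2) = 3" by (simp add: numeral_3_eq_3)
  moreover have "d (Inr l1) (Inl p2) \<le> 1" using adj_d1 assms by simp
  ultimately show False by simp
qed

lemma card_lines:
  assumes l0: "l0 \<in> L"
  shows "card L = 1 + (s+1)*t + (s+1)*s*t^2 + s^2*t^3"
proof -
  define x where "x = (Inr l0 :: 'p + 'l)"
  have xV: "x \<in> V" using l0 x_def by (simp add: inc_vertices_def)
  have conn: "\<And>v. v \<in> V \<Longrightarrow> inc_dist_le P L I x v 6" using diam xV by blast
  have d6: "\<And>v. v \<in> V \<Longrightarrow> d x v \<le> 6" using conn idist_le by blast
  define S where "S j = {v\<in>V. d x v = j}" for j
  have finS: "\<And>j. finite (S j)" using finV S_def by simp
  have SV: "\<And>j. S j \<subseteq> V" using S_def by auto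
  define N where "N v = {w\<in>V. adj v w}" for v
  define A where "A v j = {w\<in>S j. adj v w}" for v j
  have AN: "A v j = N v \<inter> S j" for v j using A_def N_def S_def by auto
  have finN: "\<And>v. finite (N v)" using finV N_def by simp
  have NL: "N (Inr l) = Inl ` {p\<in>P. I p l}" if "l \<in> L" for l
  proof
    show "N (Inr l) \<subseteq> Inl ` {p\<in>P. I p l}"
    proof
      fix w assume "w \<in> N (Inr l)"
      then show "w \<in> Inl ` {p\<in>P. I p l}" using N_def by (cases w) auto
    qed
    show "Inl ` {p\<in>P. I p l} \<subseteq> N (Inr l)" using that N_def by (auto simp: inc_vertices_def)
  qed
  have NP: "N (Inl p) = Inr ` {l\<in>L. I p l}" if "p \<in> P" for p
  proof
    show "N (Inl p) \<subseteq> Inr ` {l\<in>L. I p l}"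
    proof
      fix w assume "w \<in> N (Inl p)"
      then show "w \<in> Inr ` {l\<in>L. I p l}" using N_def by (cases w) auto
    qed
    show "Inr ` {l\<in>L. I p l} \<subseteq> N (Inl p)" using that N_def by (auto simp: inc_vertices_def)
  qed
  have deg: "card (N v) = (if isl v then t + 1 else s + 1)" if "v \<in> V" for v
  proof (cases v)
    case (Inl p)
    then have "p \<in> P" using that by (auto simp: inc_vertices_def)
    then show ?thesis using NP degP Inl by (simp add: card_image)
  next
    case (Inr l)
    then have "l \<in> L" using that by (auto simp: inc_vertices_def)
    then show ?thesis using NL degL Inr by (simp add: card_image)
  qed
  have par: "isl v = odd (d x v)" if "v \<in> V" for v
    using idist_parity[OF conn[OF that]] x_def by simp
  have degS: "card (N v) = (if odd j then t + 1 else s + 1)" if "v \<in> S j" for v j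
    using deg[of v] par[of v] that S_def by auto
  have nb: "d x w = Suc (d x v) \<or> d x v = Suc (d x w)" if "v \<in> V" "w \<in> N v" for v w
    using idist_adj[OF conn[OF that(1)]] that N_def by simp
  have up: "card (A v j) = 1" if "v \<in> S (Suc j)" "j \<le> 4" for v j
  proof -
    have vV: "v \<in> V" and dv: "d x v = Suc j" using that S_def by auto
    obtain u where u: "adj u v" "d x u = j" "inc_dist_le P L I x u j"
      using idist_parent[OF conn[OF vV] dv] by blast
    have uA: "u \<in> A v j" using u A_def S_def inc_adj_V[OF u(1)] inc_adj_sym[of P L I u v] by auto
    have "w = u" if "w \<in> A v j" for w
    proof -
      have w: "adj v w" "w \<in> V" "d x w = j" using that A_def S_def by auto
      show ?thesis
        apply (rule unique_parent[where P=P and L=L and I=I and x=x and y=v and j=j and za=w and zb=u and ka=6 and kb=6])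
        subgoal using girth by blast
        subgoal using dv .
        subgoal using \<open>j \<le> 4\<close> .
        subgoal using w(1) inc_adj_sym[of P L I v w] by simp
        subgoal using u(1) .
        subgoal using conn w(2) by blast
        subgoal using conn inc_adj_V[OF u(1)] by blast
        subgoal using w(3) .
        subgoal using u(2) .
        done
    qed
    then have "A v j = {u}" using uA by blast
    then show ?thesis by simp
  qed
  have down: "card (A v (Suc j)) = card (N v) - 1" if hyp: "v \<in> S j" "1 \<le> j" "j \<le> 5" for v j
  proof -
    obtain j0 where j0: "j = Suc j0" using hyp(2) by (cases j) auto
    have vV: "v \<in> V" and dv: "d x v = j" using hyp S_def by auto
    have "N v = A v j0 \<union> A v (Suc j)"
    proof
      show "N v \<subseteq> A v j0 \<union> A v (Suc j)"
      proof
        fix w assume w: "w \<in> N v"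
        then have "w \<in> V" using N_def by simp
        then show "w \<in> A v j0 \<union> A v (Suc j)" using nb[OF vV w] w dv j0 AN S_def by auto
      qed
      show "A v j0 \<union> A v (Suc j) \<subseteq> N v" using AN by auto
    qed
    moreover have "A v j0 \<inter> A v (Suc j) = {}" using A_def S_def j0 by auto
    moreover have "card (A v j0) = 1"
    proof -
      have "j0 \<le> 4" using j0 hyp by simp
      have "A v j0 = {w\<in>S j0. adj w v}" using A_def inc_adj_sym[of P L I] by auto
      have "card (A v j0) = 1" using up[of v j0] hyp j0 \<open>j0 \<le> 4\<close> by simp
      then show ?thesis .
    qed
    ultimately have "card (N v) = 1 + card (A v (Suc j))"
      using card_Un_disjoint[of "A v j0" "A v (Suc j)"] finS A_def by simp
    then show ?thesis by simp
  qed
  have top: "card (A v 5) = s + 1" if "v \<in> S 6" for v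
  proof -
    have vV: "v \<in> V" and dv: "d x v = 6" using that S_def by auto
    have "A v 5 = N v"
    proof
      show "A v 5 \<subseteq> N v" using AN by auto
      show "N v \<subseteq> A v 5"
      proof
        fix w assume w: "w \<in> N v"
        then have wV: "w \<in> V" using N_def by simp
        then have "d x w \<le> 6" using d6 by simp
        then show "w \<in> A v 5" using nb[OF vV w] w wV dv AN S_def by auto
      qed
    qed
    then show ?thesis using degS[OF that] by simp
  qed
  have S0: "S 0 = {x}" using S_def xV idist_0[OF conn] by auto
  have bottom: "card (A x 1) = s + 1"
  proof -
    have "A x 1 = N x"
    proof
      show "A x 1 \<subseteq> N x" using AN by auto
      show "N x \<subseteq> A x 1"
      proof
        fix w assume w: "w \<in> N x"
        then have wV: "w \<in> V" using N_def by simp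
        have "d x x = 0" using idist_0[OF conn[OF xV]] by simp
        then show "w \<in> A x 1" using nb[OF xV w] w wV AN S_def by auto
      qed
    qed
    then show ?thesis using deg[OF xV] x_def by simp
  qed
  have DC: "(\<Sum>u\<in>S j. card (A u (Suc j))) = (\<Sum>v\<in>S (Suc j). card (A v j))" for j
  proof -
    have "(\<Sum>u\<in>S j. card (A u (Suc j))) = (\<Sum>u\<in>S j. card {w\<in>S (Suc j). adj u w})"
      using A_def by simp
    also have "\<dots> = (\<Sum>w\<in>S (Suc j). card {u\<in>S j. adj u w})"
      by (rule double_count[OF finS finS])
    also have "\<dots> = (\<Sum>v\<in>S (Suc j). card (A v j))"
    proof (rule sum.cong)
      fix v assume "v \<in> S (Suc j)"
      have "{u\<in>S j. adj u v} = A v j" using A_def inc_adj_sym[of P L I] by auto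
      then show "card {u\<in>S j. adj u v} = card (A v j)" by simp
    qed simp
    finally show ?thesis .
  qed
  have c1: "card (S 1) = s + 1"
  proof -
    have "(\<Sum>u\<in>S 0. card (A u 1)) = s + 1" using S0 bottom by simp
    moreover have "(\<Sum>v\<in>S 1. card (A v 0)) = card (S 1)" using up[of _ 0] by simp
    ultimately show ?thesis using DC[of 0] by simp
  qed
  have cstep: "card (S (Suc j)) = card (S j) * (if odd j then t else s)" if "1 \<le> j" "j \<le> 4" for j
  proof -
    have "(\<Sum>u\<in>S j. card (A u (Suc j))) = (\<Sum>u\<in>S j. (if odd j then t else s))"
    proof (rule sum.cong)
      fix u assume u: "u \<in> S j"
      show "card (A u (Suc j)) = (if odd j then t else s)" using down[OF u that(1)] that degS[OF u] by simp
    qed simp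
    moreover have "(\<Sum>v\<in>S (Suc j). card (A v j)) = card (S (Suc j))" using up[of _ j] that by simp
    ultimately show ?thesis using DC[of j] by simp
  qed
  have c56: "card (S 5) * t = card (S 6) * (s + 1)"
  proof -
    have "(\<Sum>u\<in>S 5. card (A u 6)) = (\<Sum>u\<in>S 5. t)"
    proof (rule sum.cong)
      fix u assume u: "u \<in> S 5"
      have "card (A u (Suc 5)) = card (N u) - 1" using down[OF u] by simp
      moreover have "card (N u) = t + 1" using degS[OF u] by simp
      ultimately show "card (A u 6) = t" by (simp add: eval_nat_numeral)
    qed simp
    moreover have "(\<Sum>v\<in>S 6. card (A v 5)) = card (S 6) * (s + 1)" using top by simp
    ultimately show ?thesis using DC[of 5] by (simp add: numeral_eq_Suc)
  qed
  have e1: "card (S (Suc 1)) = card (S 1) * t" using cstep[of 1] by simp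
  have c2: "card (S 2) = (s+1)*t" using e1 c1 by (simp add: eval_nat_numeral)
  have e2: "card (S (Suc 2)) = card (S 2) * s" using cstep[of 2] by simp
  have c3: "card (S 3) = (s+1)*t*s" using e2 c2 by (simp add: eval_nat_numeral)
  have e3: "card (S (Suc 3)) = card (S 3) * t" using cstep[of 3] by simp
  have c4: "card (S 4) = (s+1)*t*s*t" using e3 c3 by (simp add: eval_nat_numeral)
  have e4: "card (S (Suc 4)) = card (S 4) * s" using cstep[of 4] by simp
  have c5: "card (S 5) = (s+1)*t*s*t*s" using e4 c4 by (simp add: eval_nat_numeral)
  have c6: "card (S 6) = s^2*t^3"
  proof -
    have "(s+1) * card (S 6) = (s+1) * (s^2*t^3)" using c56 c5 by (simp add: algebra_simps power2_eq_square power3_eq_cube)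
    then show ?thesis using mult_left_cancel[of "s+1"] by simp
  qed
  have LS: "Inr ` L = S 0 \<union> S 2 \<union> S 4 \<union> S 6"
  proof
    show "Inr ` L \<subseteq> S 0 \<union> S 2 \<union> S 4 \<union> S 6"
    proof
      fix v :: "'p + 'l" assume v: "v \<in> Inr ` L"
      then have vV: "v \<in> V" by (auto simp: inc_vertices_def)
      have "even (d x v)" using par[OF vV] v by auto
      moreover have "d x v \<le> 6" using d6[OF vV] .
      ultimately have "d x v = 0 \<or> d x v = 2 \<or> d x v = 4 \<or> d x v = 6" by (rule even6)
      then show "v \<in> S 0 \<union> S 2 \<union> S 4 \<union> S 6" using vV S_def by auto
    qed
    show "S 0 \<union> S 2 \<union> S 4 \<union> S 6 \<subseteq> Inr ` L"
    proof
      fix v assume v: "v \<in> S 0 \<union> S 2 \<union> S 4 \<union> S 6"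
      then have vV: "v \<in> V" using SV by blast
      have "even (d x v)" using v S_def by auto
      then have "\<not> isl v" using par[OF vV] by simp
      then show "v \<in> Inr ` L" using vV by (cases v) (auto simp: inc_vertices_def)
    qed
  qed
  have dj: "S i \<inter> S j = {}" if "i \<noteq> j" for i j using that S_def by auto
  have "card ((Inr :: 'l \<Rightarrow> 'p + 'l) ` L) = card (S 0) + card (S 2) + card (S 4) + card (S 6)"
  proof -
    have "card (S 0 \<union> S 2 \<union> S 4 \<union> S 6) = card (S 0 \<union> S 2 \<union> S 4) + card (S 6)"
      by (rule card_Un_disjoint) (use finS in \<open>auto simp: S_def\<close>)
    also have "card (S 0 \<union> S 2 \<union> S 4) = card (S 0 \<union> S 2) + card (S 4)"
      by (rule card_Un_disjoint) (use finS in \<open>auto simp: S_def\<close>)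
    also have "card (S 0 \<union> S 2) = card (S 0) + card (S 2)"
      by (rule card_Un_disjoint) (use finS in \<open>auto simp: S_def\<close>)
    finally show ?thesis using LS by simp
  qed
  moreover have "card ((Inr :: 'l \<Rightarrow> 'p + 'l) ` L) = card L" by (simp add: card_image)
  ultimately show ?thesis using S0 c2 c4 c6 by (simp add: algebra_simps power2_eq_square power3_eq_cube)
qed

end

lemma arith6:
  fixes s t k :: nat
  assumes st: "k^2*t = s" and t: "1 \<le> t"
  shows "1 + (s+1)*t + (s+1)*s*t^2 + s^2*t^3 =
         (1 + (k+1)*t + (k+1)*k*t^2 + k^2*t^3) + (1 + (k+1)*t + (k+1)*k*t^2 + k^2*t^3) * ((s-k)*t)"
proof -
  have ks: "k \<le> s"
  proof (cases k)
    case 0 then show ?thesis by simp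
  next
    case (Suc k0)
    have "0 < k * t" using Suc t by simp
    then have "k * 1 \<le> k * (k * t)" by (intro mult_le_mono2) simp
    moreover have "s = k * (k * t)" using st by (simp add: power2_eq_square mult.assoc)
    ultimately show ?thesis by simp
  qed
  have e: "int s = int k ^ 2 * int t" using st by (metis of_nat_mult of_nat_power)
  have dk: "int (s - k) = int s - int k" using ks by simp
  have I: "\<And>S K T :: int. S = K^2*T \<Longrightarrow> 1 + (S+1)*T + (S+1)*S*T^2 + S^2*T^3 =
         (1 + (K+1)*T + (K+1)*K*T^2 + K^2*T^3) + (1 + (K+1)*T + (K+1)*K*T^2 + K^2*T^3) * ((S-K)*T)"
    by algebra
  have "int (1 + (s+1)*t + (s+1)*s*t^2 + s^2*t^3) =
        int ((1 + (k+1)*t + (k+1)*k*t^2 + k^2*t^3) + (1 + (k+1)*t + (k+1)*k*t^2 + k^2*t^3) * ((s-k)*t))"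
    unfolding of_nat_add of_nat_mult of_nat_power of_nat_1 dk using I[OF e] by simp
  then show ?thesis by (simp only: of_nat_eq_iff)
qed

lemma hexc_of:
  assumes "gen_hexagon_of_order P L I s t"
  shows "hexc P L I s t"
  using assms unfolding gen_hexagon_of_order_def gen_polygon_def hexc_def by auto

lemma lines_nonempty:
  assumes "gen_hexagon_of_order P L I s t"
  obtains l where "l \<in> L"
proof -
  obtain vs where vs: "inc_cycle P L I vs" using assms unfolding gen_hexagon_of_order_def gen_polygon_def by blast
  then have "inc_adj P L I (vs ! 0) (vs ! Suc 0)" unfolding inc_cycle_def inc_walk_def by auto
  then have "\<exists>l. l \<in> L" by (cases "vs ! 0"; cases "vs ! Suc 0") auto
  then show ?thesis using that by blast
qed

lemma set_walk_V: "inc_walk P L I ws \<Longrightarrow> v \<in> set ws \<Longrightarrow> v \<in> inc_vertices P L"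
  unfolding inc_walk_def by blast

theorem mainTheorem6:
  fixes P :: "'p set" and L :: "'l set" and I :: "'p \<Rightarrow> 'l \<Rightarrow> bool"
    and P' :: "'p set" and L' :: "'l set" and s t k :: nat
  assumes "gen_hexagon_of_order P L I s t"
    and "subhexagon_of_order P' L' P L I k t"
    and "k ^ 2 * t = s"
  shows "\<forall>l \<in> L. \<exists>l' \<in> L'. \<exists>p \<in> P. I p l \<and> I p l'"
proof -
  have gh: "gen_hexagon_of_order P' L' I k t" and PP: "P' \<subseteq> P" and LL: "L' \<subseteq> L"
    using assms(2) unfolding subhexagon_of_order_def by auto
  interpret G: hexc P L I s t by (rule hexc_of[OF assms(1)])
  interpret H: hexc P' L' I k t by (rule hexc_of[OF gh])
  have t1: "1 \<le> t" using assms(1) unfolding gen_hexagon_of_order_def by simp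
  obtain l0 where l0: "l0 \<in> L" using lines_nonempty[OF assms(1)] by blast
  obtain l0' where l0': "l0' \<in> L'" using lines_nonempty[OF gh] by blast
  have cL: "card L = 1 + (s+1)*t + (s+1)*s*t^2 + s^2*t^3" by (rule G.card_lines[OF l0])
  have cL': "card L' = 1 + (k+1)*t + (k+1)*k*t^2 + k^2*t^3" by (rule H.card_lines[OF l0'])
  have finL': "finite L'" by (rule H.finL)
  have full: "l \<in> L'" if "p \<in> P'" "l \<in> L" "I p l" for p l
  proof -
    have "finite {l\<in>L. I p l}" using G.finL by simp
    moreover have "{l\<in>L'. I p l} \<subseteq> {l\<in>L. I p l}" using LL by auto
    moreover have "card {l\<in>L'. I p l} = card {l\<in>L. I p l}" using H.degP[OF that(1)] G.degP that(1) PP by auto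
    ultimately have "{l\<in>L'. I p l} = {l\<in>L. I p l}" by (rule card_subset_eq)
    then show ?thesis using that by blast
  qed
  have subpath: "\<exists>ws. inc_walk P L I ws \<and> distinct ws \<and> hd ws = Inr l1 \<and> last ws = Inr l2 \<and>
      length ws = Suc (idist P' L' I (Inr l1) (Inr l2)) \<and> idist P' L' I (Inr l1) (Inr l2) \<le> 6 \<and>
      set ws \<subseteq> inc_vertices P' L'"
    if "l1 \<in> L'" "l2 \<in> L'" for l1 l2
  proof -
    have c: "inc_dist_le P' L' I (Inr l1) (Inr l2) 6" using H.diam that by (simp add: inc_vertices_def)
    obtain ws where ws: "inc_walk P' L' I ws" "hd ws = Inr l1" "last ws = Inr l2"
      "length ws = Suc (idist P' L' I (Inr l1) (Inr l2))"
      using shortest_walk[OF c] by blast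
    have "distinct ws" using shortest_walk_distinct[OF ws] .
    moreover have "inc_walk P L I ws" using inc_walk_mono[OF PP LL ws(1)] .
    moreover have "idist P' L' I (Inr l1) (Inr l2) \<le> 6" using idist_le[OF c] .
    moreover have "set ws \<subseteq> inc_vertices P' L'" using ws(1) unfolding inc_walk_def by blast
    ultimately show ?thesis using ws by blast
  qed
  have nob: False if hb: "l1 \<in> L'" "l2 \<in> L'" "l1 \<noteq> l2" "x \<in> P" "x \<notin> P'" "I x l1" "I x l2" for l1 l2 x
  proof -
    obtain ws where ws: "inc_walk P L I ws" "distinct ws" "hd ws = Inr l1" "last ws = Inr l2"
      "length ws = Suc (idist P' L' I (Inr l1) (Inr l2))" "idist P' L' I (Inr l1) (Inr l2) \<le> 6"
      "set ws \<subseteq> inc_vertices P' L'"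
      using subpath[OF hb(1,2)] by blast
    define e where "e = idist P' L' I (Inr l1) (Inr l2)"
    have l1L: "l1 \<in> L" and l2L: "l2 \<in> L" using hb LL by auto
    have wsne: "ws \<noteq> []" using ws(1) by (simp add: inc_walk_def)
    have lastn: "ws ! e = Inr l2" using ws(4,5) wsne e_def by (simp add: last_conv_nth)
    have g1: "idist P L I (Inr l1) (ws ! e) = e"
      using G.geodesic[OF ws(1,2), of e] ws(3,5,6) e_def by simp
    have "inc_dist_le P L I (Inr l1) (Inr l2) (1 + 1)"
      by (rule dist_le_trans[OF dist_le_adj[of P L I "Inr l1" "Inl x"] dist_le_adj[of P L I "Inl x" "Inr l2"]]) (use hb l1L l2L in simp_all)
    then have "idist P L I (Inr l1) (Inr l2) \<le> 2" using idist_le by fastforce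
    then have e2: "e \<le> 2" using g1 lastn by simp
    let ?ws = "Inl x # ws"
    have w2: "inc_walk P L I ?ws" by (rule walk_Cons[OF ws(1)]) (use ws(3) hb l1L in simp)
    have "Inl x \<notin> set ws" using ws(7) hb(5) by (auto simp: inc_vertices_def)
    then have d2: "distinct ?ws" using ws(2) by simp
    have "idist P L I (hd ?ws) (?ws ! Suc e) = Suc e"
      by (rule G.geodesic[OF w2 d2]) (use ws(5) e_def e2 in simp_all)
    then have "idist P L I (Inl x) (Inr l2) = Suc e" using lastn by simp
    moreover have "idist P L I (Inl x) (Inr l2) \<le> 1" by (rule G.adj_d1) (use hb l2L in simp)
    ultimately have "e = 0" by simp
    then have "length ws = 1" using ws(5) e_def by simp
    then have "hd ws = last ws" by (cases ws) auto
    then show False using ws(3,4) hb(3) by simp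
  qed
  have noc: False if hc: "m \<in> L" "m \<notin> L'" "x1 \<in> P" "x1 \<notin> P'" "x2 \<in> P" "l1 \<in> L'" "l2 \<in> L'"
    "l1 \<noteq> l2" "I x1 m" "I x1 l1" "I x2 m" "I x2 l2" for m x1 x2 l1 l2
  proof -
    obtain ws where ws: "inc_walk P L I ws" "distinct ws" "hd ws = Inr l1" "last ws = Inr l2"
      "length ws = Suc (idist P' L' I (Inr l1) (Inr l2))" "idist P' L' I (Inr l1) (Inr l2) \<le> 6"
      "set ws \<subseteq> inc_vertices P' L'"
      using subpath[OF hc(6,7)] by blast
    define e where "e = idist P' L' I (Inr l1) (Inr l2)"
    have l1L: "l1 \<in> L" and l2L: "l2 \<in> L" using hc LL by auto
    have wsne: "ws \<noteq> []" using ws(1) by (simp add: inc_walk_def)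
    have lastn: "ws ! e = Inr l2" using ws(4,5) wsne e_def by (simp add: last_conv_nth)
    have g1: "idist P L I (Inr l1) (ws ! e) = e"
      using G.geodesic[OF ws(1,2), of e] ws(3,5,6) e_def by simp
    have a1: "inc_dist_le P L I (Inr l1) (Inr m) (1 + 1)"
      by (rule dist_le_trans[OF dist_le_adj[of P L I "Inr l1" "Inl x1"] dist_le_adj[of P L I "Inl x1" "Inr m"]]) (use hc l1L in simp_all)
    have a2: "inc_dist_le P L I (Inr m) (Inr l2) (1 + 1)"
      by (rule dist_le_trans[OF dist_le_adj[of P L I "Inr m" "Inl x2"] dist_le_adj[of P L I "Inl x2" "Inr l2"]]) (use hc l2L in simp_all)
    have "inc_dist_le P L I (Inr l1) (Inr l2) ((1 + 1) + (1 + 1))" by (rule dist_le_trans[OF a1 a2])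
    then have "idist P L I (Inr l1) (Inr l2) \<le> 4" using idist_le by fastforce
    then have e4: "e \<le> 4" using g1 lastn by simp
    let ?ws = "Inr m # Inl x1 # ws"
    have w1: "inc_walk P L I (Inl x1 # ws)" by (rule walk_Cons[OF ws(1)]) (use ws(3) hc l1L in simp)
    have w2: "inc_walk P L I ?ws" by (rule walk_Cons[OF w1]) (use hc in simp)
    have "Inl x1 \<notin> set ws" using ws(7) hc(4) by (auto simp: inc_vertices_def)
    moreover have "Inr m \<notin> set ws" using ws(7) hc(2) by (auto simp: inc_vertices_def)
    ultimately have d2: "distinct ?ws" using ws(2) by simp
    have "idist P L I (hd ?ws) (?ws ! Suc (Suc e)) = Suc (Suc e)"
      by (rule G.geodesic[OF w2 d2]) (use ws(5) e_def e4 in simp_all)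
    then have "idist P L I (Inr m) (Inr l2) = Suc (Suc e)" using lastn by simp
    moreover have "idist P L I (Inr m) (Inr l2) \<le> 2" using idist_le[OF a2] by simp
    ultimately have "e = 0" by simp
    then have "length ws = 1" using ws(5) e_def by simp
    then have "hd ws = last ws" by (cases ws) auto
    then show False using ws(3,4) hc(8) by simp
  qed
  define X where "X l' = {p\<in>P. I p l'} - P'" for l'
  define B where "B x l' = {l\<in>L. I x l} - {l'}" for x l'
  define T where "T = (\<Union>l'\<in>L'. \<Union>x\<in>X l'. B x l')"
  have finX: "finite (X l')" for l' using G.finP X_def by simp
  have finB: "finite (B x l')" for x l' using G.finL B_def by simp
  have cX: "card (X l') = s - k" if "l' \<in> L'" for l'
  proof -
    have "{p\<in>P. I p l'} \<inter> P' = {p\<in>P'. I p l'}" using PP by auto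
    then have "card (X l') = card {p\<in>P. I p l'} - card {p\<in>P'. I p l'}"
      unfolding X_def using card_Diff_subset_Int[of "{p\<in>P. I p l'}" P'] H.finP by simp
    then show ?thesis using G.degL H.degL that LL by auto
  qed
  have cB: "card (B x l') = t" if "l' \<in> L'" "x \<in> X l'" for x l'
  proof -
    have "x \<in> P" "I x l'" "l' \<in> L" using that X_def LL by auto
    then show ?thesis using G.degP[of x] B_def by simp
  qed
  have cT: "card T = card L' * ((s - k) * t)"
  proof -
    have inner: "card (\<Union>x\<in>X l'. B x l') = (s - k) * t" if l': "l' \<in> L'" for l'
    proof -
      have "card (\<Union>x\<in>X l'. B x l') = (\<Sum>x\<in>X l'. card (B x l'))"
      proof (rule card_UN_disjoint[OF finX])
        show "\<forall>x\<in>X l'. finite (B x l')" using finB by blast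
        show "\<forall>x1\<in>X l'. \<forall>x2\<in>X l'. x1 \<noteq> x2 \<longrightarrow> B x1 l' \<inter> B x2 l' = {}"
        proof (intro ballI impI)
          fix x1 x2 assume x: "x1 \<in> X l'" "x2 \<in> X l'" "x1 \<noteq> x2"
          show "B x1 l' \<inter> B x2 l' = {}"
          proof (rule ccontr)
            assume "B x1 l' \<inter> B x2 l' \<noteq> {}"
            then obtain m where m: "m \<in> L" "m \<noteq> l'" "I x1 m" "I x2 m" using B_def by blast
            show False
              by (rule G.two_points[of m l' x1 x2]) (use m x l' LL X_def in auto)
          qed
        qed
      qed
      also have "\<dots> = (\<Sum>x\<in>X l'. t)" using cB[OF l'] by simp
      also have "\<dots> = (s - k) * t" using cX[OF l'] by simp
      finally show ?thesis .
    qed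
    have "card T = (\<Sum>l'\<in>L'. card (\<Union>x\<in>X l'. B x l'))"
      unfolding T_def
    proof (rule card_UN_disjoint[OF finL'])
      show "\<forall>l'\<in>L'. finite (\<Union>x\<in>X l'. B x l')" using finX finB by blast
      show "\<forall>l1\<in>L'. \<forall>l2\<in>L'. l1 \<noteq> l2 \<longrightarrow> (\<Union>x\<in>X l1. B x l1) \<inter> (\<Union>x\<in>X l2. B x l2) = {}"
      proof (intro ballI impI)
        fix l1 l2 assume l: "l1 \<in> L'" "l2 \<in> L'" "l1 \<noteq> l2"
        show "(\<Union>x\<in>X l1. B x l1) \<inter> (\<Union>x\<in>X l2. B x l2) = {}"
        proof (rule ccontr)
          assume "(\<Union>x\<in>X l1. B x l1) \<inter> (\<Union>x\<in>X l2. B x l2) \<noteq> {}"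
          then obtain m x1 x2 where mx: "x1 \<in> X l1" "x2 \<in> X l2" "m \<in> B x1 l1" "m \<in> B x2 l2" by blast
          have h: "m \<in> L" "m \<noteq> l1" "I x1 m" "I x2 m" "x1 \<in> P" "x1 \<notin> P'" "I x1 l1"
            "x2 \<in> P" "x2 \<notin> P'" "I x2 l2" using mx X_def B_def by auto
          have "m \<notin> L'"
          proof
            assume "m \<in> L'"
            show False by (rule nob[of l1 m x1]) (use h l \<open>m \<in> L'\<close> in auto)
          qed
          then show False using noc[of m x1 x2 l1 l2] h l by blast
        qed
      qed
    qed
    also have "\<dots> = (\<Sum>l'\<in>L'. (s - k) * t)" using inner by simp
    finally show ?thesis by simp
  qed
  have TL: "T \<subseteq> L" using T_def B_def by auto
  have TL': "T \<inter> L' = {}"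
  proof (rule ccontr)
    assume "T \<inter> L' \<noteq> {}"
    then obtain m l' x where h: "l' \<in> L'" "x \<in> X l'" "m \<in> B x l'" "m \<in> L'" using T_def by blast
    show False by (rule nob[of l' m x]) (use h X_def B_def in auto)
  qed
  have finT: "finite T" using TL G.finL finite_subset by blast
  have "card (T \<union> L') = card T + card L'" using card_Un_disjoint[OF finT finL' TL'] .
  also have "\<dots> = card L" using cT cL cL' arith6[OF assms(3) t1] by simp
  finally have cc: "card (T \<union> L') = card L" .
  have TLL: "T \<union> L' = L" using card_subset_eq[OF G.finL _ cc] TL LL by blast
  show ?thesis
  proof
    fix l assume l: "l \<in> L"
    then have "l \<in> T \<or> l \<in> L'" using TLL by blast
    then show "\<exists>l'\<in>L'. \<exists>p\<in>P. I p l \<and> I p l'"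
    proof
      assume "l \<in> T"
      then obtain l' x where "l' \<in> L'" "x \<in> X l'" "l \<in> B x l'" using T_def by blast
      then show ?thesis using X_def B_def by blast
    next
      assume lL': "l \<in> L'"
      have "card {p\<in>P. I p l} = s + 1" using G.degL[OF l] .
      then have "card {p\<in>P. I p l} \<noteq> 0" by simp
      then have "{p\<in>P. I p l} \<noteq> {}" by (metis card.empty)
      then obtain p where "p \<in> P" "I p l" by blast
      then show ?thesis using lL' by blast
    qed
  qed
qed

end
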